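(* Let $\underline{\mathbb{G}}=(\mathbb{G},\mathcal{V},\omega_{\mathcal{V}},\mathcal{F},\omega_{\mathcal{F}})$ be a packaged ribbon graph and let $e$ be an edge of $\mathbb{G}$. Then \[(\underline{\mathbb{G}}\backslash e)^* = \underline{\mathbb{G}}^*/e \qquad\text{and}\qquad (\underline{\mathbb{G}}/ e)^* = \underline{\mathbb{G}}^*\backslash e.\]
   Context: All ribbon graphs are orientable. A ribbon graph $\mathbb{G}=(V,E)$ is an orientable surface with boundary formed as a union of discs $V$ (vertices) and discs $E$ (edges) such that vertices and edges meet in disjoint arcs, each arc lies on the boundary of exactly one vertex and one edge, and each edge contains exactly two such arcs. $\mathbb{G}\backslash e$ is obtained by removing the edge $e$; $\mathbb{G}/e$ (contraction) is obtained by taking the boundary curve(s) of $e\cup u\cup v$ (where $u,v$ are the ends of $e$, possibly equal), attaching a disc to each such curve to form new vertices, and removing $e,u,v$. The dual $\mathbb{G}^*$ is obtained by capping each boundary component of $\mathbb{G}$ with a disc; these discs are the vertices of $\mathbb{G}^*$ and the edges are the same as those of $\mathbb{G}$. Thus vertices of $\mathbb{G}$ correspond to boundary components of $\mathbb{G}^*$ and boundary components of $\mathbb{G}$ to vertices of $\mathbb{G}^*$. A packaged ribbon graph is a tuple $\underline{\mathbb{G}}=(\mathbb{G},\mathcal{V},\omega_{\mathcal{V}},\mathcal{F},\omega_{\mathcal{F}})$ where $\mathbb{G}=(V,E)$ is a ribbon graph with set of boundary components $F$, $\mathcal{V}$ is a partition of $V$, $\mathcal{F}$ is a partition of $F$,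 and $\omega_{\mathcal{V}}:\mathcal{V}\to\mathbb{N}_0$, $\omega_{\mathcal{F}}:\mathcal{F}\to\mathbb{N}_0$ are weightings. $[v]$ and $[f]$ denote the blocks containing $v$ and $f$. Deletion $\underline{\mathbb{G}}\backslash e$: the ribbon graph is $\mathbb{G}\backslash e$, and $\mathcal{V},\omega_{\mathcal{V}}$ are unchanged; boundary components not meeting $e$ persist with their blocks and weights. (i) If $e$ meets a single boundary component $f$ (twice), deleting $e$ creates two boundary components $f',g'$ in place of $f$; the block $[f]$ is replaced by $([f]\setminus\{f\})\cup\{f',g'\}$ with weight $\omega_{\mathcal{F}}([f])+1$. (ii) If $e$ meets two boundary components $f\neq g$ with $[f]=[g]$, deletion creates one boundary component $f'$; the block is replaced by $([f]\setminus\{f,g\})\cup\{f'\}$ with weight $\omega_{\mathcal{F}}([f])+1$. (iii) If $e$ meets $f\ne g$ with $[f]\neq[g]$, deletion creates one boundary component $f'$; the blocks $[f],[g]$ are replaced by the single block $([f]\cup[g]\setminus\{f,g\})\cup\{f'\}$ with weight $\omega_{\mathcal{F}}([f])+\omega_{\mathcal{F}}([g])$. All other blocks and weights are unchanged. Contraction $\underline{\mathbb{G}}/e$: the ribbon graph is $\mathbb{G}/e$; boundary components of $\mathbb{G}$ and $\mathbb{G}/e$ correspond naturally, and $\mathcal{F},\omega_{\mathcal{F}}$ are transported along this correspondence. (i) If $e$ is a loop at $u$, contraction replaces $u$ by two vertices $u',v'$; the block $[u]$ is replaced by $([u]\setminus\{u\})\cup\{u',v'\}$ with weight $\omega_{\mathcal{V}}([u])+1$.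 (ii) If $e$ is a non-loop with ends $u\ne v$ and $[u]=[v]$, contraction gives one vertex $u'$; the block is replaced by $([u]\setminus\{u,v\})\cup\{u'\}$ with weight $\omega_{\mathcal{V}}([u])+1$. (iii) If $e$ has ends $u\neq v$ with $[u]\ne[v]$, the blocks $[u],[v]$ are replaced by $([u]\cup[v]\setminus\{u,v\})\cup\{u'\}$ with weight $\omega_{\mathcal{V}}([u])+\omega_{\mathcal{V}}([v])$. All other blocks and weights are unchanged. Dual: $\underline{\mathbb{G}}^*=(\mathbb{G}^*,\mathcal{V}^*,\omega_{\mathcal{V}^*},\mathcal{F}^*,\omega_{\mathcal{F}^*})$, where $\mathcal{V}^*$ (a partition of the vertices of $\mathbb{G}^*$) and its weighting are induced from $\mathcal{F},\omega_{\mathcal{F}}$ via the correspondence between boundary components of $\mathbb{G}$ and vertices of $\mathbb{G}^*$, and $\mathcal{F}^*,\omega_{\mathcal{F}^*}$ are induced from $\mathcal{V},\omega_{\mathcal{V}}$ via the correspondence between vertices of $\mathbb{G}$ and boundary components of $\mathbb{G}^*$. Edges of $\mathbb{G}^*$ are identified with those of $\mathbb{G}$. *)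

theory Defs
  imports "HOL-Combinatorics.Permutations"
begin

text \<open>
Orientable ribbon graphs are encoded as combinatorial maps (rotation systems).  A dart p with
alpha p = p is a point dart; it must satisfy sigma p = p and it represents an isolated
vertex (a vertex meeting no edge).
\<close>

record 'd rgraph =
  darts :: "'d set"
  alpha :: "'d \<Rightarrow> 'd"
  sigma :: "'d \<Rightarrow> 'd"

definition rg_orbit :: "('d \<Rightarrow> 'd) \<Rightarrow> 'd \<Rightarrow> 'd set" where
  "rg_orbit f x = {(f ^^ n) x | n. True}"

definition rg_wf :: "'d rgraph \<Rightarrow> bool" where
  "rg_wf G \<longleftrightarrow> finite (darts G)
     \<and> alpha G permutes darts G \<and> (\<forall>x. alpha G (alpha G x) = x)
     \<and> sigma G permutes darts G
     \<and> (\<forall>x\<in>darts G. alpha G x = x \<longrightarrow> sigma G x = x)"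

definition rg_phi :: "'d rgraph \<Rightarrow> 'd \<Rightarrow> 'd" where
  "rg_phi G = sigma G \<circ> alpha G"

definition rg_vertices :: "'d rgraph \<Rightarrow> 'd set set" where
  "rg_vertices G = {rg_orbit (sigma G) x | x. x \<in> darts G}"

definition rg_faces :: "'d rgraph \<Rightarrow> 'd set set" where
  "rg_faces G = {rg_orbit (rg_phi G) x | x. x \<in> darts G}"

definition rg_edges :: "'d rgraph \<Rightarrow> 'd set set" where
  "rg_edges G = {{x, alpha G x} | x. x \<in> darts G \<and> alpha G x \<noteq> x}"

definition rg_skip :: "('d \<Rightarrow> 'd) \<Rightarrow> 'd set \<Rightarrow> 'd \<Rightarrow> 'd" where
  "rg_skip f D x = (f ^^ (LEAST n. 0 < n \<and> (f ^^ n) x \<notin> D)) x"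

text \<open>Naming convention: an orbit O of darts that lies entirely inside the removed edge
 disappears; the corresponding isolated vertex is represented by the point dart
 (SOME x. x \<in> O).\<close>
definition rg_keep :: "'d set \<Rightarrow> 'd" where
  "rg_keep Q = (SOME x. x \<in> Q)"

text \<open>Natural correspondence of orbits (vertices for deletion, faces for contraction).\<close>
definition rg_transport :: "'d set \<Rightarrow> 'd set \<Rightarrow> 'd set" where
  "rg_transport e Q = (if Q \<subseteq> e then {rg_keep Q} else Q - e)"

definition rg_delete :: "'d rgraph \<Rightarrow> 'd set \<Rightarrow> 'd rgraph" where
  "rg_delete G e =
     (let P = rg_keep ` {Q \<in> rg_vertices G. Q \<subseteq> e} in
      \<lparr> darts = (darts G - e) \<union> P,
        alpha = (\<lambda>x. if x \<in> darts G - e then alpha G x else x),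
        sigma = (\<lambda>x. if x \<in> darts G - e then rg_skip (sigma G) e x else x) \<rparr>)"

definition rg_contract :: "'d rgraph \<Rightarrow> 'd set \<Rightarrow> 'd rgraph" where
  "rg_contract G e =
     (let P = rg_keep ` {Q \<in> rg_faces G. Q \<subseteq> e};
          a = (\<lambda>x. if x \<in> darts G - e then alpha G x else x);
          ph = (\<lambda>x. if x \<in> darts G - e then rg_skip (rg_phi G) e x else x) in
      \<lparr> darts = (darts G - e) \<union> P,
        alpha = a,
        sigma = ph \<circ> a \<rparr>)"

definition rg_dual :: "'d rgraph \<Rightarrow> 'd rgraph" where
  "rg_dual G = \<lparr> darts = darts G, alpha = alpha G, sigma = rg_phi G \<rparr>"

text \<open>Packaged ribbon graphs.  Partitions are sets of blocks; weights are functions on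
 blocks (only their values on blocks are meaningful).\<close>

record 'd pgraph =
  pg_graph :: "'d rgraph"
  pg_VP :: "'d set set set"
  pg_wV :: "'d set set \<Rightarrow> nat"
  pg_FP :: "'d set set set"
  pg_wF :: "'d set set \<Rightarrow> nat"

definition is_partition :: "'a set \<Rightarrow> 'a set set \<Rightarrow> bool" where
  "is_partition S P \<longleftrightarrow> (\<forall>B\<in>P. B \<noteq> {} \<and> B \<subseteq> S) \<and> \<Union>P = S
     \<and> (\<forall>B\<in>P. \<forall>C\<in>P. B \<noteq> C \<longrightarrow> B \<inter> C = {})"

definition pg_wf :: "'d pgraph \<Rightarrow> bool" where
  "pg_wf P \<longleftrightarrow> rg_wf (pg_graph P)
     \<and> is_partition (rg_vertices (pg_graph P)) (pg_VP P)
     \<and> is_partition (rg_faces (pg_graph P)) (pg_FP P)"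

definition pg_eq :: "'d pgraph \<Rightarrow> 'd pgraph \<Rightarrow> bool" where
  "pg_eq P Q \<longleftrightarrow> pg_graph P = pg_graph Q \<and> pg_VP P = pg_VP Q \<and> pg_FP P = pg_FP Q
     \<and> (\<forall>B\<in>pg_VP P. pg_wV P B = pg_wV Q B) \<and> (\<forall>B\<in>pg_FP P. pg_wF P B = pg_wF Q B)"

text \<open>Xs: old objects (vertices or faces) of G,
 Ys: objects of the new graph, Bl/w: partition and weight on Xs.
 This covers cases (i), (ii), (iii) uniformly.\<close>
definition merge_blocks :: "'d set \<Rightarrow> 'd set set \<Rightarrow> 'd set set \<Rightarrow> 'd set set set
     \<Rightarrow> ('d set set \<Rightarrow> nat) \<Rightarrow> 'd set set set \<times> ('d set set \<Rightarrow> nat)" where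
  "merge_blocks e Xs Ys Bl w =
     (let XM = {X \<in> Xs. X \<inter> e \<noteq> {}};
          TB = {B \<in> Bl. B \<inter> XM \<noteq> {}};
          NY = {Y \<in> Ys. Y \<inter> \<Union>XM \<noteq> {}};
          M = (\<Union>TB - XM) \<union> NY;
          wM = (if card TB = 1 then (\<Sum>B\<in>TB. w B) + 1 else (\<Sum>B\<in>TB. w B)) in
      ((Bl - TB) \<union> {M}, (\<lambda>B. if B = M then wM else w B)))"

definition transport_blocks :: "'d set \<Rightarrow> 'd set set set
     \<Rightarrow> ('d set set \<Rightarrow> nat) \<Rightarrow> 'd set set set \<times> ('d set set \<Rightarrow> nat)" where
  "transport_blocks e Bl w =
     ((\<lambda>B. rg_transport e ` B) ` Bl, (\<lambda>B'. w (inv_into Bl (\<lambda>B. rg_transport e ` B) B')))"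

definition pg_delete :: "'d pgraph \<Rightarrow> 'd set \<Rightarrow> 'd pgraph" where
  "pg_delete P e =
     (let G = pg_graph P; G' = rg_delete G e;
          V' = transport_blocks e (pg_VP P) (pg_wV P);
          F' = merge_blocks e (rg_faces G) (rg_faces G') (pg_FP P) (pg_wF P) in
      \<lparr> pg_graph = G', pg_VP = fst V', pg_wV = snd V', pg_FP = fst F', pg_wF = snd F' \<rparr>)"

definition pg_contract :: "'d pgraph \<Rightarrow> 'd set \<Rightarrow> 'd pgraph" where
  "pg_contract P e =
     (let G = pg_graph P; G' = rg_contract G e;
          V' = merge_blocks e (rg_vertices G) (rg_vertices G') (pg_VP P) (pg_wV P);
          F' = transport_blocks e (pg_FP P) (pg_wF P) in
      \<lparr> pg_graph = G', pg_VP = fst V', pg_wV = snd V', pg_FP = fst F', pg_wF = snd F' \<rparr>)"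

definition pg_dual :: "'d pgraph \<Rightarrow> 'd pgraph" where
  "pg_dual P = \<lparr> pg_graph = rg_dual (pg_graph P), pg_VP = pg_FP P, pg_wV = pg_wF P,
                 pg_FP = pg_VP P, pg_wF = pg_wV P \<rparr>"

end

theory Submission
  imports Defs
begin

lemma dual_sel[simp]: "darts (rg_dual G) = darts G" "alpha (rg_dual G) = alpha G" "sigma (rg_dual G) = rg_phi G"
  unfolding rg_dual_def by simp_all

lemma phi_dual: "rg_wf G \<Longrightarrow> rg_phi (rg_dual G) = sigma G"
  unfolding rg_wf_def rg_phi_def rg_dual_def by auto

lemma faces_dual: "rg_wf G \<Longrightarrow> rg_faces (rg_dual G) = rg_vertices G"
  unfolding rg_faces_def rg_vertices_def
  by (simp add: phi_dual dual_sel)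

lemma vertices_dual: "rg_vertices (rg_dual G) = rg_faces G"
  unfolding rg_faces_def rg_vertices_def rg_dual_def by simp

lemma aa_id:
  assumes "rg_wf G" "e \<in> rg_edges G"
  shows "(\<lambda>x. if x \<in> darts G - e then alpha G x else x) \<circ> (\<lambda>x. if x \<in> darts G - e then alpha G x else x) = id"
proof
  fix x
  obtain y where y: "e = {y, alpha G y}" using assms(2) unfolding rg_edges_def by auto
  have inv: "\<And>z. alpha G (alpha G z) = z" using assms(1) unfolding rg_wf_def by auto
  have pd: "alpha G permutes darts G" using assms(1) unfolding rg_wf_def by auto
  show "((\<lambda>x. if x \<in> darts G - e then alpha G x else x) \<circ> (\<lambda>x. if x \<in> darts G - e then alpha G x else x)) x = id x"
  proof (cases "x \<in> darts G - e")
    case True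
    then have "alpha G x \<in> darts G" using pd by (simp add: permutes_in_image)
    moreover have "alpha G x \<notin> e" using True y inv by auto metis+
    ultimately show ?thesis using True inv by simp
  next
    case False then show ?thesis by auto
  qed
qed

lemma del_dual:
  assumes "rg_wf G"
  shows "rg_dual (rg_delete G e) = rg_contract (rg_dual G) e"
  unfolding rg_delete_def rg_contract_def Let_def faces_dual[OF assms] phi_dual[OF assms]
  by (simp add: rg_phi_def cong: if_cong)

lemma con_dual:
  assumes "rg_wf G" "e \<in> rg_edges G"
  shows "rg_dual (rg_contract G e) = rg_delete (rg_dual G) e"
proof -
  have "rg_phi (rg_contract G e) = (\<lambda>x. if x \<in> darts G - e then rg_skip (rg_phi G) e x else x)"
    using aa_id[OF assms] unfolding rg_phi_def rg_contract_def Let_def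
    by (simp add: comp_assoc)
  then show ?thesis
    unfolding rg_dual_def[of "rg_contract G e"]
    by (simp add: rg_delete_def Let_def vertices_dual rg_contract_def cong: if_cong)
qed

lemma phi_del_dual:
  "rg_phi (rg_delete (rg_dual G) e) = sigma (rg_contract G e)"
  unfolding rg_phi_def rg_delete_def rg_contract_def Let_def rg_dual_def by (simp cong: if_cong)

lemma faces_del_dual:
  assumes "rg_wf G" "e \<in> rg_edges G"
  shows "rg_faces (rg_delete (rg_dual G) e) = rg_vertices (rg_contract G e)"
proof -
  have "darts (rg_delete (rg_dual G) e) = darts (rg_contract G e)"
    using con_dual[OF assms] by (metis rg_dual_def rgraph.select_convs(1))
  then show ?thesis unfolding rg_faces_def rg_vertices_def phi_del_dual by simp
qed

theorem proposition2p7: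
  fixes P :: "'d pgraph" and e :: "'d set"
  assumes "pg_wf P" and "e \<in> rg_edges (pg_graph P)"
  shows "pg_eq (pg_dual (pg_delete P e)) (pg_contract (pg_dual P) e)
       \<and> pg_eq (pg_dual (pg_contract P e)) (pg_delete (pg_dual P) e)"
proof -
  have wf: "rg_wf (pg_graph P)" using assms(1) unfolding pg_wf_def by simp
  show ?thesis
    unfolding pg_eq_def pg_dual_def pg_delete_def pg_contract_def Let_def
    using del_dual[OF wf, of e] con_dual[OF wf assms(2)] faces_del_dual[OF wf assms(2)]
      faces_dual[OF wf] vertices_dual[of "rg_delete (pg_graph P) e"]
    by (simp add: vertices_dual)
qed

end
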